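(* Let $\Gamma$ be a 3-colex, $c\neq c'$ colors, and let $s$ be the syndrome of a $Z$-error on the 3D color code on $\Gamma$. Then the restriction $\pi_{cc'}(s)$ of $s$ to the vertices of $\Gamma^{*\setminus cc'}$ is a valid syndrome for a $Z$-error on the 3D toric code on $\Gamma^{*\setminus cc'}$, i.e. there exists a $Z$-error on the edges of $\Gamma^{*\setminus cc'}$ whose toric-code syndrome is $\pi_{cc'}(s)$.
   Context: Colors are $\{r,b,g,y\}$. A 3-colex $\Gamma$ is a 3-dimensional cell complex without boundary in which every vertex is 4-valent and lies in exactly four 3-cells, and whose 3-cells are properly 4-colored: every face lies in exactly two 3-cells, which have different colors. The dual complex $\Gamma^*$ has an $i$-cell for every $(3-i)$-cell of $\Gamma$, with incidences reversed; every 3-cell of $\Gamma^*$ is a tetrahedron. A vertex of $\Gamma^*$ is given the color of the corresponding 3-cell of $\Gamma$, so the four vertices of each tetrahedron have distinct colors; an edge with endpoint colors $x,y$ is an $xy$-edge. The 3D color code on $\Gamma$ has one qubit per tetrahedron $\nu$ of $\Gamma^*$, $X$-stabilizer generators $\prod_{\nu\ni v}X_\nu$ for vertices $v$ and $Z$-stabilizer generators $\prod_{\nu\supset e}Z_\nu$ for edges $e$. The syndrome of a $Z$-error $\prod_{\nu\in\Omega}Z_\nu$ is the function on vertices $s_v=|\{\nu\in\Omega:v\in\nu\}|\bmod 2$. For distinct $c,c'$ with remaining colors $d,d'$, the minor complex $\Gamma^{*\setminus cc'}$ is obtained by deleting all vertices of colors $c,c'$; its vertices are the $d$- and $d'$-vertices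 and its edges the $dd'$-edges of $\Gamma^*$. The 3D toric code on $\Gamma^{*\setminus cc'}$ has qubits on edges and $X$-checks $\prod_{e\ni v}X_e$ on vertices; the syndrome of a $Z$-error on edges at a vertex is the parity of the number of error edges incident to it. *)

theory Defs
  imports Main
begin

datatype color = Red | Blue | Green | Yellow

text \<open>Combinatorial data of the dual complex of a 3-colex:
  vertex set V (vertices of the dual = 3-cells of the colex), coloured by col;
  edge set E (edges of the dual = faces of the colex), with endpoint map ends;
  tetrahedra T (3-cells of the dual = vertices of the colex), with vertex map
  tverts and edge map tedges.  Cells are abstract objects (multiple cells on
  the same vertex set are allowed).\<close>
definition colex_dual ::
  "'v set \<Rightarrow> 'e set \<Rightarrow> 't set \<Rightarrow> ('v \<Rightarrow> color) \<Rightarrow> ('e \<Rightarrow> 'v set)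
   \<Rightarrow> ('t \<Rightarrow> 'v set) \<Rightarrow> ('t \<Rightarrow> 'e set) \<Rightarrow> bool" where
  "colex_dual V E T col ends tverts tedges \<longleftrightarrow>
     finite V \<and> finite E \<and> finite T \<and>
     \<comment> \<open>each face of the colex lies in exactly two 3-cells of different colours:
         each dual edge has two endpoints of different colours\<close>
     (\<forall>e\<in>E. ends e \<subseteq> V \<and> (\<exists>x y. ends e = {x, y} \<and> col x \<noteq> col y)) \<and>
     \<comment> \<open>each vertex of the colex is 4-valent and in four 3-cells, properly coloured:
         each dual 3-cell is a tetrahedron whose four vertices have distinct colours\<close>
     (\<forall>\<nu>\<in>T. tverts \<nu> \<subseteq> V \<and> card (tverts \<nu>) = 4 \<and> col ` tverts \<nu> = UNIV \<and>
        tedges \<nu> \<subseteq> E \<and> card (tedges \<nu>) = 6 \<and>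
        (\<forall>e\<in>tedges \<nu>. ends e \<subseteq> tverts \<nu>) \<and>
        (\<forall>x\<in>tverts \<nu>. \<forall>y\<in>tverts \<nu>. x \<noteq> y \<longrightarrow> (\<exists>e\<in>tedges \<nu>. ends e = {x, y}))) \<and>
     \<comment> \<open>every vertex and every edge of the dual lies in some tetrahedron\<close>
     (\<forall>v\<in>V. \<exists>\<nu>\<in>T. v \<in> tverts \<nu>) \<and>
     (\<forall>e\<in>E. \<exists>\<nu>\<in>T. e \<in> tedges \<nu>)"

text \<open>Syndrome (as a parity, True = 1) of the colour-code Z-error on the set
  Omega of tetrahedra, at the vertex v.\<close>
definition color_syndrome :: "('t \<Rightarrow> 'v set) \<Rightarrow> 't set \<Rightarrow> 'v \<Rightarrow> bool" where
  "color_syndrome tverts \<Omega> v = odd (card {\<nu>\<in>\<Omega>. v \<in> tverts \<nu>})"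

definition toric_syndrome :: "('e \<Rightarrow> 'v set) \<Rightarrow> 'e set \<Rightarrow> 'v \<Rightarrow> bool" where
  "toric_syndrome ends F v = odd (card {e\<in>F. v \<in> ends e})"

definition minor_vertices :: "'v set \<Rightarrow> ('v \<Rightarrow> color) \<Rightarrow> color \<Rightarrow> color \<Rightarrow> 'v set" where
  "minor_vertices V col c c' = {v\<in>V. col v \<noteq> c \<and> col v \<noteq> c'}"

definition minor_edges ::
  "'e set \<Rightarrow> ('e \<Rightarrow> 'v set) \<Rightarrow> ('v \<Rightarrow> color) \<Rightarrow> color \<Rightarrow> color \<Rightarrow> 'e set" where
  "minor_edges E ends col c c' = {e\<in>E. \<forall>x\<in>ends e. col x \<noteq> c \<and> col x \<noteq> c'}"

end

theory Submission
  imports Defs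
begin

lemma color_UNIV: "(UNIV::color set) = {Red,Blue,Green,Yellow}"
proof (rule set_eqI)
  fix x :: color show "x \<in> UNIV \<longleftrightarrow> x \<in> {Red,Blue,Green,Yellow}" by (cases x) auto
qed

lemma card_color: "card (UNIV::color set) = 4"
  unfolding color_UNIV by simp

lemma other_two:
  assumes "(c::color) \<noteq> c'"
  shows "\<exists>d d'. d \<noteq> d' \<and> d \<noteq> c \<and> d \<noteq> c' \<and> d' \<noteq> c \<and> d' \<noteq> c' \<and>
     (\<forall>z. z \<noteq> c \<and> z \<noteq> c' \<longrightarrow> z = d \<or> z = d')"
proof -
  have "card (UNIV - {c,c'}) = 2" using assms card_color by (simp add: card_Diff_subset)
  then obtain d d' where eq: "UNIV - {c,c'} = {d,d'}" and ne: "d \<noteq> d'" using card_2_iff[of "UNIV - {c,c'}"] by blast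
  have e: "\<And>z. (z \<in> UNIV - {c,c'}) = (z \<in> {d,d'})" using eq by simp
  have 1: "d \<noteq> c \<and> d \<noteq> c'" using e[of d] by simp
  have 2: "d' \<noteq> c \<and> d' \<noteq> c'" using e[of d'] by simp
  have 3: "\<forall>z. z \<noteq> c \<and> z \<noteq> c' \<longrightarrow> z = d \<or> z = d'" using e by simp
  show ?thesis using 1 2 3 ne by blast
qed

lemma card_toggle:
  assumes "finite A"
  shows "odd (card {x \<in> (A - {a}) \<union> ({a} - A). P x}) = (odd (card {x\<in>A. P x}) \<noteq> P a)"
proof (cases "a \<in> A")
  case True
  have "{x \<in> (A - {a}) \<union> ({a} - A). P x} = {x\<in>A. P x} - {a}" using True by auto
  moreover have "finite {x\<in>A. P x}" using assms by simp
  ultimately show ?thesis using True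
    by (cases "P a") (auto simp: card_Diff_singleton)
next
  case False
  have "{x \<in> (A - {a}) \<union> ({a} - A). P x} = (if P a then insert a {x\<in>A. P x} else {x\<in>A. P x})"
    using False by auto
  moreover have "finite {x\<in>A. P x}" using assms by simp
  ultimately show ?thesis using False by auto
qed

theorem corollary4:
  fixes V :: "'v set" and E :: "'e set" and T :: "'t set"
    and col :: "'v \<Rightarrow> color" and ends :: "'e \<Rightarrow> 'v set"
    and tverts :: "'t \<Rightarrow> 'v set" and tedges :: "'t \<Rightarrow> 'e set"
    and c c' :: color and \<Omega> :: "'t set"
  assumes "colex_dual V E T col ends tverts tedges"
    and "c \<noteq> c'"
    and "\<Omega> \<subseteq> T"
  shows "\<exists>F \<subseteq> minor_edges E ends col c c'.
           \<forall>v \<in> minor_vertices V col c c'.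
             toric_syndrome ends F v = color_syndrome tverts \<Omega> v"
proof -
  note cd = assms(1)[unfolded colex_dual_def]
  have Tprop: "\<forall>\<nu>\<in>T. tverts \<nu> \<subseteq> V \<and> card (tverts \<nu>) = 4 \<and> col ` tverts \<nu> = UNIV \<and>
        tedges \<nu> \<subseteq> E \<and> card (tedges \<nu>) = 6 \<and>
        (\<forall>e\<in>tedges \<nu>. ends e \<subseteq> tverts \<nu>) \<and>
        (\<forall>x\<in>tverts \<nu>. \<forall>y\<in>tverts \<nu>. x \<noteq> y \<longrightarrow> (\<exists>e\<in>tedges \<nu>. ends e = {x, y}))"
    using cd by (elim conjE)
  have finTT: "finite T" and finEE: "finite E" using cd by simp_all
  obtain d d' where dd: "d \<noteq> d'" "d \<noteq> c" "d \<noteq> c'" "d' \<noteq> c" "d' \<noteq> c'"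
    "\<And>z. z \<noteq> c \<Longrightarrow> z \<noteq> c' \<Longrightarrow> z = d \<or> z = d'"
    using other_two[OF assms(2)] by blast
  have key: "\<exists>e. e \<in> minor_edges E ends col c c' \<and>
      (\<forall>v \<in> minor_vertices V col c c'. v \<in> ends e \<longleftrightarrow> v \<in> tverts \<nu>)" if "\<nu> \<in> T" for \<nu>
  proof -
    have tv: "tverts \<nu> \<subseteq> V" "card (tverts \<nu>) = 4" "col ` tverts \<nu> = UNIV"
      "\<forall>e\<in>tedges \<nu>. ends e \<subseteq> tverts \<nu>"
      "\<forall>x\<in>tverts \<nu>. \<forall>y\<in>tverts \<nu>. x \<noteq> y \<longrightarrow> (\<exists>e\<in>tedges \<nu>. ends e = {x, y})"
      "tedges \<nu> \<subseteq> E"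
      using Tprop[rule_format, OF that] by auto
    have fin: "finite (tverts \<nu>)" using tv(2) card.infinite by fastforce
    have inj: "inj_on col (tverts \<nu>)"
      by (rule eq_card_imp_inj_on[OF fin]) (simp add: tv(2,3) card_color)
    obtain x where x: "x \<in> tverts \<nu>" "col x = d" using tv(3) by (metis UNIV_I imageE)
    obtain y where y: "y \<in> tverts \<nu>" "col y = d'" using tv(3) by (metis UNIV_I imageE)
    have "x \<noteq> y" using x y dd by auto
    then obtain e where e: "e \<in> tedges \<nu>" "ends e = {x,y}" using tv(5) x y by blast
    have "e \<in> minor_edges E ends col c c'"
      using e tv(6) x y dd unfolding minor_edges_def by auto
    moreover have "\<forall>v \<in> minor_vertices V col c c'. v \<in> ends e \<longleftrightarrow> v \<in> tverts \<nu>"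
    proof
      fix v assume v: "v \<in> minor_vertices V col c c'"
      show "v \<in> ends e \<longleftrightarrow> v \<in> tverts \<nu>"
      proof
        assume "v \<in> tverts \<nu>"
        moreover have "col v = d \<or> col v = d'" using v dd(6) unfolding minor_vertices_def by auto
        ultimately have "v = x \<or> v = y" using inj x y by (metis inj_on_def)
        then show "v \<in> ends e" using e by auto
      qed (use e x y in auto)
    qed
    ultimately show ?thesis by blast
  qed
  have finT: "finite \<Omega>" using finTT assms(3) finite_subset by blast
  have finE: "finite (minor_edges E ends col c c')" using finEE unfolding minor_edges_def by simp
  from finT assms(3) show ?thesis
  proof (induction \<Omega> rule: finite_induct)
    case empty
    show ?case by (rule exI[of _ "{}"]) (simp add: toric_syndrome_def color_syndrome_def)
  next
    case (insert \<nu> \<Omega>)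
    then obtain F where F: "F \<subseteq> minor_edges E ends col c c'"
      "\<forall>v \<in> minor_vertices V col c c'. toric_syndrome ends F v = color_syndrome tverts \<Omega> v"
      by auto
    obtain e where e: "e \<in> minor_edges E ends col c c'"
      "\<forall>v \<in> minor_vertices V col c c'. v \<in> ends e \<longleftrightarrow> v \<in> tverts \<nu>"
      using key[of \<nu>] insert.prems by auto
    have finF: "finite F" using F(1) finE finite_subset by blast
    show ?case
    proof (intro exI[of _ "(F - {e}) \<union> ({e} - F)"] conjI ballI)
      show "(F - {e}) \<union> ({e} - F) \<subseteq> minor_edges E ends col c c'" using F(1) e(1) by auto
    next
      fix v assume v: "v \<in> minor_vertices V col c c'"
      have "{\<mu> \<in> insert \<nu> \<Omega>. v \<in> tverts \<mu>} =
            (if v \<in> tverts \<nu> then insert \<nu> {\<mu> \<in> \<Omega>. v \<in> tverts \<mu>} else {\<mu> \<in> \<Omega>. v \<in> tverts \<mu>})"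
        by auto
      moreover have "\<nu> \<notin> {\<mu> \<in> \<Omega>. v \<in> tverts \<mu>}" using insert by auto
      moreover have "finite {\<mu> \<in> \<Omega>. v \<in> tverts \<mu>}" using insert by simp
      ultimately have cs: "color_syndrome tverts (insert \<nu> \<Omega>) v =
          (color_syndrome tverts \<Omega> v \<noteq> (v \<in> tverts \<nu>))"
        unfolding color_syndrome_def by auto
      show "toric_syndrome ends ((F - {e}) \<union> ({e} - F)) v = color_syndrome tverts (insert \<nu> \<Omega>) v"
        unfolding cs toric_syndrome_def card_toggle[OF finF]
        using F(2) v e(2) unfolding toric_syndrome_def by auto
    qed
  qed
qed

end
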